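(* Let $K:E(K_{s,t})\to L_n$ be an edge-labeling of the complete bipartite graph $K_{s,t}$ with permutations from $L_n$. Then $(K_{s,t},K)$ has no consistent vertex-labeling if and only if $K_{s,t}$ contains a $4$-cycle $C$ such that $(C,K|_{E(C)})$ has no consistent vertex-labeling.
   Context: Labeled graphs: $G$ is a finite simple graph in which each edge is given a fixed orientation; $uv$ denotes the edge oriented from $u$ to $v$. An edge-labeling $K:E(G)\to S_n$ assigns to each edge a permutation of $[n]=\{0,\dots,n-1\}$. A vertex-labeling is a map $k:V(G)\to[n]$. An edge $uv$ with $K(uv)=\pi$ is a contradiction of $k$ if $\pi(k(u))\neq k(v)$. A vertex-labeling is consistent if it has no contradictions. $L_n=\{\pi_0,\dots,\pi_{n-1}\}\subseteq S_n$, where $\pi_i(x)\equiv i-x \pmod n$. Each $\pi_i$ is an involution, so orientation is irrelevant. *)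

theory Defs
  imports Main
begin

definition piL :: "nat \<Rightarrow> nat \<Rightarrow> nat \<Rightarrow> nat" where
  "piL n i x = nat ((int i - int x) mod int n)"

definition Ln :: "nat \<Rightarrow> (nat \<Rightarrow> nat) set" where
  "Ln n = {piL n i | i. i < n}"

text \<open>A labeled graph: vertex set V, oriented edge set E (pair (u,v) = edge uv),
  edge-labeling K. A vertex-labeling k into [n] is consistent if it has no contradictions.\<close>
definition consistent ::
  "nat \<Rightarrow> 'v set \<Rightarrow> ('v \<times> 'v) set \<Rightarrow> ('v \<times> 'v \<Rightarrow> nat \<Rightarrow> nat) \<Rightarrow> ('v \<Rightarrow> nat) \<Rightarrow> bool" where
  "consistent n V E K k \<longleftrightarrow> (\<forall>v\<in>V. k v < n) \<and> (\<forall>(u,v)\<in>E. K (u,v) (k u) = k v)"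

definition KV :: "nat \<Rightarrow> nat \<Rightarrow> (nat + nat) set" where
  "KV s t = Inl ` {..<s} \<union> Inr ` {..<t}"

definition KE :: "nat \<Rightarrow> nat \<Rightarrow> ((nat + nat) \<times> (nat + nat)) set" where
  "KE s t = {(Inl a, Inr b) | a b. a < s \<and> b < t}"

definition C4V :: "nat \<Rightarrow> nat \<Rightarrow> nat \<Rightarrow> nat \<Rightarrow> (nat + nat) set" where
  "C4V a1 a2 b1 b2 = {Inl a1, Inl a2, Inr b1, Inr b2}"

definition C4E :: "nat \<Rightarrow> nat \<Rightarrow> nat \<Rightarrow> nat \<Rightarrow> ((nat + nat) \<times> (nat + nat)) set" where
  "C4E a1 a2 b1 b2 = {(Inl a1, Inr b1), (Inl a1, Inr b2), (Inl a2, Inr b1), (Inl a2, Inr b2)}"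

end

theory Submission
  imports Defs
begin

lemma key: assumes "n \<ge> 1" "y < n"
  shows "piL n i x = y \<longleftrightarrow> int n dvd (int x + int y - int i)"
proof -
  have "piL n i x = y \<longleftrightarrow> (int i - int x) mod int n = int y"
    unfolding piL_def using assms by (auto)
  also have "\<dots> \<longleftrightarrow> (int i - int x) mod int n = int y mod int n"
    using assms by simp
  also have "\<dots> \<longleftrightarrow> int n dvd (int i - int x - int y)"
    by (simp add: mod_eq_dvd_iff)
  also have "\<dots> \<longleftrightarrow> int n dvd (int x + int y - int i)"
    by (metis dvd_minus_iff minus_diff_eq diff_diff_eq add.commute)
  finally show ?thesis .
qed

theorem mainTheorem19:
  fixes n s t :: nat and K :: "(nat + nat) \<times> (nat + nat) \<Rightarrow> nat \<Rightarrow> nat"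
  assumes "n \<ge> 1"
    and "\<forall>e\<in>KE s t. K e \<in> Ln n"
  shows "(\<not> (\<exists>k. consistent n (KV s t) (KE s t) K k)) \<longleftrightarrow>
         (\<exists>a1 a2 b1 b2. a1 < s \<and> a2 < s \<and> b1 < t \<and> b2 < t \<and> a1 \<noteq> a2 \<and> b1 \<noteq> b2 \<and>
            \<not> (\<exists>k. consistent n (C4V a1 a2 b1 b2) (C4E a1 a2 b1 b2) K k))"
proof
  assume "\<exists>a1 a2 b1 b2. a1 < s \<and> a2 < s \<and> b1 < t \<and> b2 < t \<and> a1 \<noteq> a2 \<and> b1 \<noteq> b2 \<and>
            \<not> (\<exists>k. consistent n (C4V a1 a2 b1 b2) (C4E a1 a2 b1 b2) K k)"
  then obtain a1 a2 b1 b2 where h: "a1 < s" "a2 < s" "b1 < t" "b2 < t"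
    and nc: "\<not> (\<exists>k. consistent n (C4V a1 a2 b1 b2) (C4E a1 a2 b1 b2) K k)" by blast
  show "\<not> (\<exists>k. consistent n (KV s t) (KE s t) K k)"
  proof
    assume "\<exists>k. consistent n (KV s t) (KE s t) K k"
    then obtain k where k: "consistent n (KV s t) (KE s t) K k" by blast
    have "C4V a1 a2 b1 b2 \<subseteq> KV s t" using h unfolding C4V_def KV_def by auto
    moreover have "C4E a1 a2 b1 b2 \<subseteq> KE s t" using h unfolding C4E_def KE_def by auto
    ultimately have "consistent n (C4V a1 a2 b1 b2) (C4E a1 a2 b1 b2) K k"
      using k unfolding consistent_def by blast
    with nc show False by blast
  qed
next
  assume lhs: "\<not> (\<exists>k. consistent n (KV s t) (KE s t) K k)"
  show "\<exists>a1 a2 b1 b2. a1 < s \<and> a2 < s \<and> b1 < t \<and> b2 < t \<and> a1 \<noteq> a2 \<and> b1 \<noteq> b2 \<and>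
            \<not> (\<exists>k. consistent n (C4V a1 a2 b1 b2) (C4E a1 a2 b1 b2) K k)"
  proof (rule ccontr)
    assume nr: "\<not> ?thesis"
    define c where "c a b = (SOME i. i < n \<and> K (Inl a, Inr b) = piL n i)" for a b
    have hc: "c a b < n \<and> K (Inl a, Inr b) = piL n (c a b)" if "a < s" "b < t" for a b
    proof -
      have "(Inl a, Inr b) \<in> KE s t" using that unfolding KE_def by auto
      then have "\<exists>i. i < n \<and> K (Inl a, Inr b) = piL n i" using assms(2) unfolding Ln_def by auto
      then show ?thesis unfolding c_def by (rule someI_ex)
    qed
    define d where "d a b = int (c a b)" for a b
    have alt: "int n dvd (d a1 b1 + d a2 b2 - d a1 b2 - d a2 b1)"
      if "a1 < s" "a2 < s" "b1 < t" "b2 < t" for a1 a2 b1 b2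
    proof (cases "a1 = a2 \<or> b1 = b2")
      case True then show ?thesis by auto
    next
      case False
      with nr that obtain k where k: "consistent n (C4V a1 a2 b1 b2) (C4E a1 a2 b1 b2) K k" by blast
      have e: "int n dvd (int (k (Inl a)) + int (k (Inr b)) - d a b)"
        if "a \<in> {a1,a2}" "b \<in> {b1,b2}" for a b
      proof -
        have "a < s" "b < t" using that \<open>a1 < s\<close> \<open>a2 < s\<close> \<open>b1 < t\<close> \<open>b2 < t\<close> by auto
        have "(Inl a, Inr b) \<in> C4E a1 a2 b1 b2" using that unfolding C4E_def by auto
        then have "K (Inl a, Inr b) (k (Inl a)) = k (Inr b)" using k unfolding consistent_def by auto
        moreover have "k (Inr b) < n" using k that unfolding consistent_def C4V_def by auto
        ultimately show ?thesis using key[OF assms(1)] hc[OF \<open>a < s\<close> \<open>b < t\<close>]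
          unfolding d_def by auto
      qed
      have "int n dvd ((int (k (Inl a1)) + int (k (Inr b1)) - d a1 b1)
          + (int (k (Inl a2)) + int (k (Inr b2)) - d a2 b2)
          - (int (k (Inl a1)) + int (k (Inr b2)) - d a1 b2)
          - (int (k (Inl a2)) + int (k (Inr b1)) - d a2 b1))"
        by (intro dvd_diff dvd_add e) auto
      then have "int n dvd - (d a1 b1 + d a2 b2 - d a1 b2 - d a2 b1)" by (simp add: algebra_simps)
      then show ?thesis by (simp only: dvd_minus_iff)
    qed
    show False
    proof (cases "s = 0 \<or> t = 0")
      case True
      have "consistent n (KV s t) (KE s t) K (\<lambda>_. 0)"
        using True assms(1) unfolding consistent_def KV_def KE_def by auto
      with lhs show False by blast
    next
      case False
      then have s0: "0 < s" and t0: "0 < t" by auto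
      define k where "k v = (case v of Inl a \<Rightarrow> nat ((d a 0 - d 0 0) mod int n)
                                     | Inr b \<Rightarrow> c 0 b)" for v
      have "consistent n (KV s t) (KE s t) K k"
        unfolding consistent_def
      proof (intro conjI ballI)
        fix v assume "v \<in> KV s t"
        then show "k v < n" unfolding KV_def k_def using hc s0 assms(1)
          by (auto simp: nat_less_iff)
      next
        fix e assume "e \<in> KE s t"
        then obtain a b where ab: "e = (Inl a, Inr b)" "a < s" "b < t" unfolding KE_def by auto
        have kb: "k (Inr b) < n" using hc[OF s0 ab(3)] unfolding k_def by simp
        have ka: "int (k (Inl a)) = (d a 0 - d 0 0) mod int n"
          unfolding k_def using assms(1) by simp
        have "int n dvd ((d a 0 - d 0 0) mod int n - (d a 0 - d 0 0))"
          by (metis mod_eq_dvd_iff mod_mod_trivial)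
        moreover have "int n dvd (d a 0 + d 0 b - d a b - d 0 0)"
          using alt[OF ab(2) s0 t0 ab(3)] by (simp add: algebra_simps dvd_diff_commute)
        ultimately have "int n dvd (((d a 0 - d 0 0) mod int n - (d a 0 - d 0 0))
             + (d a 0 + d 0 b - d a b - d 0 0))" by (rule dvd_add)
        then have "int n dvd (int (k (Inl a)) + int (k (Inr b)) - int (c a b))"
          using ka unfolding k_def d_def by (simp add: algebra_simps)
        then have "K (Inl a, Inr b) (k (Inl a)) = k (Inr b)"
          using key[OF assms(1) kb] hc[OF ab(2) ab(3)] by simp
        then show "case e of (u, v) \<Rightarrow> K (u, v) (k u) = k v" using ab by simp
      qed
      with lhs show False by blast
    qed
  qed
qed

end
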